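(* For every integer $m\ge2$, $$\sum_{k=1}^\infty\frac{\binom{2k}{m}}{5^k(2k-1)k^2(2k+1)}=\frac{2(-1)^m}{m}\ln\frac54-(-1)^m2\sqrt5\ln\alpha+\frac{F_{m-1}}{m-1}\frac{1}{2^{m-1}}+\frac{F_m}{m}\frac1{2^m}$$ $$+\frac2m\sum_{j=1}^{\lfloor (m-1)/2\rfloor}\frac{L_{m-2j}}{m-2j}\frac{1}{2^{m-2j}}-\frac2m\sum_{j=1}^{\lceil (m-1)/2\rceil}\frac{L_{m-2j+1}}{m-2j+1}\frac{1}{2^{m-2j+1}}$$ $$-5\sum_{j=0}^{\lfloor (m-1)/2\rfloor}\frac{F_{m-2j}}{m-2j}\frac{1}{2^{m-2j}}+5\sum_{j=1}^{\lceil (m-1)/2\rceil}\frac{F_{m-2j+1}}{m-2j+1}\frac{1}{2^{m-2j+1}}.$$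
   Context: $F_n=(\alpha^n-\beta^n)/(\alpha-\beta)$ and $L_n=\alpha^n+\beta^n$ are the Fibonacci and Lucas numbers, with $\alpha=(1+\sqrt5)/2$, $\beta=(1-\sqrt5)/2$. Empty sums are $0$. *)

theory Defs
  imports Complex_Main
begin

definition alpha :: real where "alpha = (1 + sqrt 5) / 2"
definition beta :: real where "beta = (1 - sqrt 5) / 2"

definition Fib :: "int \<Rightarrow> real" where
  "Fib n = (alpha powi n - beta powi n) / (alpha - beta)"
definition Luc :: "int \<Rightarrow> real" where
  "Luc n = alpha powi n + beta powi n"

end

theory Submission
  imports Defs "HOL-Analysis.Analysis"
begin
lemma binom_series:
  fixes t :: real
  assumes "\<bar>t\<bar> < 1"
  shows "(\<lambda>n. real (n choose j) * t^n) sums (t^j / (1-t)^(Suc j))"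
proof -
  have "\<bar>-t\<bar> < 1" using assms by simp
  from gen_binomial_real[OF this, of "-(real j + 1)"]
  have "(\<lambda>n. ((-(real j + 1)) gchoose n) * (-t)^n) sums (1 + -t) powr (-(real j + 1))" .
  moreover have "((-(real j + 1)) gchoose n) * (-t)^n = real (n + j choose j) * t^n" for n
  proof -
    have "((-(real j + 1)) gchoose n) = (-1)^n * ((real j + 1 + real n - 1) gchoose n)"
      by (rule gbinomial_minus)
    also have "real j + 1 + real n - 1 = real (n + j)" by simp
    also have "(real (n+j) gchoose n) = real (n + j choose n)" by (simp add: binomial_gbinomial)
    also have "(n + j choose n) = (n + j choose j)" using binomial_symmetric[of n "n+j"] by simp
    finally show ?thesis by (simp add: power_minus' power_mult_distrib)
  qed
  moreover have "(1 + -t) powr (-(real j + 1)) = 1 / (1-t)^(Suc j)"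
  proof -
    have p: "1 - t > 0" using assms by simp
    have "(1 + -t) powr (-(real j + 1)) = inverse ((1-t) powr real (Suc j))"
      using powr_minus[of "1-t" "real j + 1"] by (simp add: add_ac)
    also have "(1-t) powr real (Suc j) = (1-t)^(Suc j)" using p by (rule powr_realpow)
    finally show ?thesis by (simp add: divide_inverse)
  qed
  ultimately have "(\<lambda>n. real (n + j choose j) * t^n) sums (1 / (1-t)^(Suc j))" by simp
  hence "(\<lambda>n. t^j * (real (n + j choose j) * t^n)) sums (t^j * (1 / (1-t)^(Suc j)))"
    by (rule sums_mult)
  hence "(\<lambda>n. real ((n + j) choose j) * t^(n + j)) sums (t^j / (1-t)^(Suc j))"
    by (simp add: power_add mult_ac)
  thus ?thesis
    by (subst (asm) sums_zero_iff_shift[of j "\<lambda>n. real (n choose j) * t^n"]) auto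
qed

lemma even_sums:
  fixes h :: "nat \<Rightarrow> real"
  assumes "h sums s" "\<And>n. odd n \<Longrightarrow> h n = 0"
  shows "(\<lambda>k. h (2*k)) sums s"
proof -
  have eq: "(\<Sum>k<N. h (2*k)) = (\<Sum>n<2*N. h n)" for N
    using sum_split_even_odd[of "\<lambda>k. h k" "\<lambda>k. h k" N] assms(2)
    by (simp add: mult.commute)
  have "(\<lambda>n. \<Sum>i<n. h i) \<longlonglongrightarrow> s" using assms(1) by (simp add: sums_def)
  hence "((\<lambda>n. \<Sum>i<n. h i) \<circ> (\<lambda>N. 2*N)) \<longlonglongrightarrow> s"
    by (rule LIMSEQ_subseq_LIMSEQ) (simp add: strict_mono_def)
  thus ?thesis unfolding sums_def by (simp add: eq o_def)
qed

lemma odd_sums: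
  fixes h :: "nat \<Rightarrow> real"
  assumes "h sums s" "\<And>n. even n \<Longrightarrow> h n = 0"
  shows "(\<lambda>k. h (2*k+1)) sums s"
proof -
  have "(\<lambda>n. h (Suc n)) sums s" using assms sums_Suc_iff[of h s] by simp
  from even_sums[OF this] show ?thesis using assms(2) by simp
qed

lemma s5: "sqrt 5 * sqrt 5 = (5::real)" by simp

lemma G_pos: "(1/sqrt 5)^j / (1 - 1/sqrt 5)^(Suc j) = sqrt 5 * alpha^(Suc j) / 2^(Suc j)"
proof -
  have s1: "sqrt 5 > (1::real)" by (simp add: real_less_rsqrt)
  have a: "(1/sqrt 5) / (1 - 1/sqrt 5) = alpha / 2"
    using s1 s5 by (simp add: alpha_def field_simps)
  have b: "1 / (1 - 1/sqrt 5) = sqrt 5 * alpha / 2"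
    using s1 s5 by (simp add: alpha_def field_simps)
  have "(1/sqrt 5)^j / (1 - 1/sqrt 5)^(Suc j) = ((1/sqrt 5) / (1 - 1/sqrt 5))^j * (1 / (1 - 1/sqrt 5))"
    by (simp only: power_divide power_Suc) (simp add: field_simps)
  also have "\<dots> = (alpha/2)^j * (sqrt 5 * alpha / 2)" by (simp only: a b)
  finally show ?thesis by (simp add: power_divide field_simps)
qed

lemma G_neg: "(-(1/sqrt 5))^j / (1 - -(1/sqrt 5))^(Suc j) = - sqrt 5 * beta^(Suc j) / 2^(Suc j)"
proof -
  have s1: "sqrt 5 > (1::real)" by (simp add: real_less_rsqrt)
  have nz: "1 + sqrt 5 \<noteq> (0::real)" "sqrt 5 + 1 \<noteq> (0::real)" using s1 by (smt (verit))+
  have a: "(-(1/sqrt 5)) / (1 - -(1/sqrt 5)) = beta / 2"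
    using s1 s5 nz by (simp add: beta_def field_simps)
  have b: "1 / (1 - -(1/sqrt 5)) = - sqrt 5 * beta / 2"
    using s1 s5 nz by (simp add: beta_def field_simps)
  have "(-(1/sqrt 5))^j / (1 - -(1/sqrt 5))^(Suc j) = ((-(1/sqrt 5)) / (1 - -(1/sqrt 5)))^j * (1 / (1 - -(1/sqrt 5)))"
    by (simp only: power_divide power_Suc) (simp add: field_simps)
  also have "\<dots> = (beta/2)^j * (- sqrt 5 * beta / 2)" by (simp only: a b)
  finally show ?thesis by (simp add: power_divide field_simps)
qed

lemma E_series:
  "(\<lambda>k. real (2*k choose j) * (1/5)^k) sums (sqrt 5 / 2^(j+2) * (alpha^(j+1) - beta^(j+1)))"
proof -
  let ?y = "1 / sqrt 5 :: real"
  have s1: "sqrt 5 > (1::real)" by (simp add: real_less_rsqrt)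
  have y1: "\<bar>?y\<bar> < 1" "\<bar>-?y\<bar> < 1" using s1 by auto
  have "(\<lambda>n. (real (n choose j) * ?y^n + real (n choose j) * (-?y)^n) / 2) sums
        ((sqrt 5 * alpha^(Suc j) / 2^(Suc j) + - sqrt 5 * beta^(Suc j) / 2^(Suc j)) / 2)"
    using sums_divide[OF sums_add[OF binom_series[OF y1(1), of j] binom_series[OF y1(2), of j]], of 2]
    by (simp only: G_pos G_neg)
  from even_sums[OF this]
  have "(\<lambda>k. (real (2*k choose j) * ?y^(2*k) + real (2*k choose j) * (-?y)^(2*k)) / 2) sums
        ((sqrt 5 * alpha^(Suc j) / 2^(Suc j) + - sqrt 5 * beta^(Suc j) / 2^(Suc j)) / 2)"
    by (simp add: power_minus')
  moreover have "?y^(2*k) = (1/5)^k" for k by (simp add: power_mult power_divide)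
  ultimately show ?thesis by (simp add: power_minus' field_simps)
qed

lemma O_series:
  "(\<lambda>k. real (2*k+1 choose j) * (1/5)^k) sums (5 / 2^(j+2) * (alpha^(j+1) + beta^(j+1)))"
proof -
  let ?y = "1 / sqrt 5 :: real"
  have s1: "sqrt 5 > (1::real)" by (simp add: real_less_rsqrt)
  have y1: "\<bar>?y\<bar> < 1" "\<bar>-?y\<bar> < 1" using s1 by auto
  have "(\<lambda>n. (real (n choose j) * ?y^n - real (n choose j) * (-?y)^n) / 2) sums
        ((sqrt 5 * alpha^(Suc j) / 2^(Suc j) - - sqrt 5 * beta^(Suc j) / 2^(Suc j)) / 2)"
    using sums_divide[OF sums_diff[OF binom_series[OF y1(1), of j] binom_series[OF y1(2), of j]], of 2]
    by (simp only: G_pos G_neg)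
  from odd_sums[OF this]
  have "(\<lambda>k. (real (2*k+1 choose j) * ?y^(2*k+1) - real (2*k+1 choose j) * (-?y)^(2*k+1)) / 2) sums
        ((sqrt 5 * alpha^(Suc j) / 2^(Suc j) - - sqrt 5 * beta^(Suc j) / 2^(Suc j)) / 2)"
    by (simp add: power_minus')
  hence "(\<lambda>k. real (2*k+1 choose j) * ?y^(2*k+1)) sums
        ((sqrt 5 * alpha^(Suc j) / 2^(Suc j) - - sqrt 5 * beta^(Suc j) / 2^(Suc j)) / 2)"
    by (simp add: power_minus')
  from sums_mult[OF this, of "sqrt 5"]
  have "(\<lambda>k. sqrt 5 * (real (2*k+1 choose j) * ?y^(2*k+1))) sums
        (sqrt 5 * ((sqrt 5 * alpha^(Suc j) / 2^(Suc j) - - sqrt 5 * beta^(Suc j) / 2^(Suc j)) / 2))" .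
  moreover have "(\<lambda>k. sqrt 5 * (real (2*k+1 choose j) * ?y^(2*k+1))) = (\<lambda>k. real (2*k+1 choose j) * (1/5)^k)"
  proof
    fix k
    have "sqrt 5 * ?y^(2*k+1) = (1/5)^k"
      by (simp add: power_mult power_divide)
    thus "sqrt 5 * (real (2*k+1 choose j) * ?y^(2*k+1)) = real (2*k+1 choose j) * (1/5)^k"
      by (metis mult.left_commute)
  qed
  moreover have "sqrt 5 * ((sqrt 5 * alpha^(Suc j) / 2^(Suc j) - - sqrt 5 * beta^(Suc j) / 2^(Suc j)) / 2)
     = 5 / 2^(j+2) * (alpha^(j+1) + beta^(j+1))"
    by (simp add: field_simps)
  ultimately show ?thesis by (simp only:)
qed

lemma sums_eqI: "f sums a \<Longrightarrow> (\<And>k. f k = g k) \<Longrightarrow> a = b \<Longrightarrow> g sums b"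
  by (metis ext)

lemma s5': "sqrt 5 * (sqrt 5 * z) = 5 * (z::real)" by (simp add: mult.assoc[symmetric])

lemma A2_series:
  "(\<lambda>k. real (2*k+1 choose j) * (1/5)^(k+1)) sums ((alpha^(j+1) + beta^(j+1)) / 2^(j+2))"
  by (rule sums_eqI[OF sums_mult[OF O_series[of j], of "1/5"]]) (simp_all add: field_simps)

lemma B_series:
  "(\<lambda>k. real (2*k choose j) * (1/5)^(k+1)) sums ((alpha^(j+1) - beta^(j+1)) / (sqrt 5 * 2^(j+2)))"
  by (rule sums_eqI[OF sums_mult[OF E_series[of j], of "1/5"]]) (auto simp: field_simps s5')

lemma C2_series:
  "(\<lambda>k. real (2*k+2 choose j) * (1/5)^(k+1)) sums (sqrt 5 / 2^(j+2) * (alpha^(j+1) - beta^(j+1)) - (if j = 0 then 1 else 0))"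
proof -
  have "(\<lambda>k. real (2*Suc k choose j) * (1/5)^(Suc k)) sums (sqrt 5 / 2^(j+2) * (alpha^(j+1) - beta^(j+1)) - real (2*0 choose j) * (1/5)^0)"
    using E_series[of j] by (subst sums_Suc_iff) simp
  thus ?thesis by (rule sums_eqI) auto
qed

lemma A1_series:
  "(\<lambda>k. (1/5)^(k+1) / real (2*k+2)) sums (ln (5/4) / 2)"
proof -
  have "\<bar>-(1/5)\<bar> < (1::real)" by simp
  from ln_series'[OF this] have "(\<lambda>n. - ((1/5::real)^n) / real n) sums ln (4/5)" by simp
  hence "(\<lambda>n. - ((1/5::real)^(Suc n)) / real (Suc n)) sums ln (4/5)"
    by (subst sums_Suc_iff) simp
  from sums_mult[OF this, of "-1/2"]
  have "(\<lambda>n. -1/2 * (- ((1/5::real)^(Suc n)) / real (Suc n))) sums (-1/2 * ln (4/5))" .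
  moreover have "ln (4/5::real) = - ln (5/4)" by (simp add: ln_div)
  hence "-1/2 * ln (4/5) = ln (5/4) / (2::real)" by simp
  moreover have "-1/2 * (- ((1/5::real)^(Suc n)) / real (Suc n)) = (1/5)^(n+1) / real (2*n+2)" for n
    by (simp add: field_simps)
  ultimately show ?thesis using sums_eqI[of _ "-1/2 * ln (4/5)" "\<lambda>k. (1/5)^(k+1) / real (2*k+2)"] by blast
qed

lemma C1_series:
  "(\<lambda>k. (1/5)^(k+1) / real (2*k+3)) sums (sqrt 5 * ln alpha - 1)"
proof -
  let ?y = "1 / sqrt 5 :: real"
  have s1: "sqrt 5 > (1::real)" by (simp add: real_less_rsqrt)
  have y1: "\<bar>?y\<bar> < 1" "\<bar>-?y\<bar> < 1" using s1 by auto
  have s3: "sqrt (5::real) < 3" using real_sqrt_less_mono[of 5 9] by simp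
  have "0 < 1 + sqrt (5::real)" using s1 by linarith
  hence ap: "alpha > 0" unfolding alpha_def by simp
  have q: "(1 + ?y) / (1 + - ?y) = alpha * alpha"
  proof -
    have nz: "sqrt 5 - 1 \<noteq> (0::real)" "5 - sqrt 5 \<noteq> (0::real)" "sqrt 5 \<noteq> (0::real)" using s1 s3 by auto
    show ?thesis using nz s1 by (simp add: alpha_def field_simps)
  qed
  have lq: "(ln (1 + ?y) - ln (1 + - ?y)) / 2 = ln alpha"
  proof -
    have "ln (1 + ?y) - ln (1 + - ?y) = ln ((1 + ?y) / (1 + - ?y))"
    proof -
      have "0 < ?y" by simp
      hence "0 < 1 + ?y" "0 < 1 + - ?y" using y1 by linarith+
      thus ?thesis by (simp add: ln_div)
    qed
    also have "\<dots> = 2 * ln alpha" using ap by (simp only: q ln_mult) simp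
    finally show ?thesis by simp
  qed
  have "(\<lambda>n. (- ((- ?y)^n) / real n - - ((- (- ?y))^n) / real n) / 2) sums ((ln (1 + ?y) - ln (1 + - ?y)) / 2)"
    using sums_divide[OF sums_diff[OF ln_series'[OF y1(1)] ln_series'[OF y1(2)]], of 2] .
  hence "(\<lambda>n. (- ((- ?y)^n) / real n - - ((- (- ?y))^n) / real n) / 2) sums ln alpha" by (simp only: lq)
  moreover have "\<And>n. even n \<Longrightarrow> (- ((- ?y)^n) / real n - - ((- (- ?y))^n) / real n) / 2 = 0"
    by (simp add: power_minus')
  ultimately have "(\<lambda>k. (- ((- ?y)^(2*k+1)) / real (2*k+1) - - ((- (- ?y))^(2*k+1)) / real (2*k+1)) / 2) sums ln alpha"
    by (rule odd_sums)
  moreover have "(- ((- ?y)^(2*k+1)) / real (2*k+1) - - ((- (- ?y))^(2*k+1)) / real (2*k+1)) / 2 = ?y^(2*k+1) / real (2*k+1)" for k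
  proof -
    have "(- ?y)^(2*k+1) = - (?y^(2*k+1))" by (rule power_minus_odd) simp
    thus ?thesis by simp
  qed
  ultimately have "(\<lambda>k. ?y^(2*k+1) / real (2*k+1)) sums ln alpha" by (rule sums_eqI) (rule refl)
  hence "(\<lambda>k. ?y^(2*Suc k+1) / real (2*Suc k+1)) sums (ln alpha - ?y)"
    by (subst sums_Suc_iff) simp
  from sums_mult[OF this, of "sqrt 5"]
  have "(\<lambda>k. sqrt 5 * (?y^(2*Suc k+1) / real (2*Suc k+1))) sums (sqrt 5 * (ln alpha - ?y))" .
  moreover have "sqrt 5 * (?y^(2*Suc k+1) / real (2*Suc k+1)) = (1/5)^(k+1) / real (2*k+3)" for k
  proof -
    have "sqrt 5 * ?y^(2*Suc k+1) = (1/5)^(k+1)"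
      by (simp add: power_mult power_divide)
    moreover have "real (2*Suc k+1) = real (2*k+3)" by simp
    ultimately show ?thesis
      by (metis times_divide_eq_right)
  qed
  moreover have "sqrt 5 * (ln alpha - ?y) = sqrt 5 * ln alpha - 1" by (simp add: algebra_simps)
  ultimately show ?thesis by (rule sums_eqI)
qed

lemma L1:
  "real (n choose r) / real (Suc n) =
     (-1)^r / real (Suc n) + (\<Sum>i=1..r. (-1)^(r-i) * real (n choose (i-1)) / real i)"
proof (induction r)
  case 0
  then show ?case by simp
next
  case (Suc r)
  have pas: "real (n choose Suc r) = real (Suc n choose Suc r) - real (n choose r)"
    by (simp add: binomial_Suc_Suc)
  have ab: "real (Suc n choose Suc r) / real (Suc n) = real (n choose r) / real (Suc r)"
  proof -
    have "real (Suc r) * real (Suc n choose Suc r) = real (Suc n) * real (n choose r)"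
      using Suc_times_binomial[of r n] by (metis of_nat_mult)
    thus ?thesis by (simp add: field_simps)
  qed
  have "real (n choose Suc r) / real (Suc n) = real (n choose r) / real (Suc r) - real (n choose r) / real (Suc n)"
    by (simp only: pas diff_divide_distrib ab)
  also have "\<dots> = real (n choose r) / real (Suc r) - ((-1)^r / real (Suc n) + (\<Sum>i=1..r. (-1)^(r-i) * real (n choose (i-1)) / real i))"
    by (simp only: Suc.IH)
  also have "(\<Sum>i=1..r. (-1)^(r-i) * real (n choose (i-1)) / real i) = - (\<Sum>i=1..r. (-1)^(Suc r-i) * real (n choose (i-1)) / real i)"
    by (simp add: sum_negf[symmetric] Suc_diff_le)
  finally show ?case by simp
qed

lemma pf: "k > 0 \<Longrightarrow> 1 / ((2 * real k - 1) * (real k)^2 * (2 * real k + 1)) =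
   - 1 / (real k)^2 + 2 / (2 * real k - 1) - 2 / (2 * real k + 1)"
proof -
  assume "k > 0"
  hence k1: "real k \<ge> 1" by simp
  hence "2 * real k - 1 \<noteq> 0" "2 * real k + 1 \<noteq> 0" "real k \<noteq> 0" by linarith+
  thus ?thesis by (simp add: field_simps) (simp add: algebra_simps power2_eq_square)
qed

lemma termwise:
  fixes m k :: nat
  assumes m: "m \<ge> 2"
  defines "x \<equiv> (1/5::real)^(k+1)"
  shows "real ((2 * Suc k) choose m) / (5 ^ Suc k * (2 * real (Suc k) - 1) * (real (Suc k))^2 * (2 * real (Suc k) + 1))
    = - (4 / real m) * ((-1)^(m-1) * (x / real (2*k+2))
          + (\<Sum>i=1..m-1. (-1)^(m-1-i) / real i * (real (2*k+1 choose (i-1)) * x)))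
      + 2 * ((real (2*k choose (m-1)) * x) / real m + (real (2*k choose (m-2)) * x) / real (m-1))
      - 2 * ((-1)^m * (x / real (2*k+3))
          + (\<Sum>i=1..m. (-1)^(m-i) / real i * (real (2*k+2 choose (i-1)) * x)))"
proof -
  let ?c = "real (2*k+2 choose m)"
  let ?K = "real (Suc k)"
  have i: "?c / ?K^2 = (4 / real m) * ((-1)^(m-1) / real (2*k+2)
           + (\<Sum>i=1..m-1. (-1)^(m-1-i) * real (2*k+1 choose (i-1)) / real i))"
  proof -
    have "m * (2*k+2 choose m) = (2*k+2) * ((2*k+1) choose (m-1))"
      using m times_binomial_minus1_eq[of m "2*k+2"] by simp
    hence "real (m * (2*k+2 choose m)) = real ((2*k+2) * ((2*k+1) choose (m-1)))" by (simp only:)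
    hence e: "real m * ?c = real (2*k+2) * real (2*k+1 choose (m-1))" by (simp only: of_nat_mult)
    have mp: "real m > 0" using m by simp
    have ce: "?c = real (2*k+2) * real (2*k+1 choose (m-1)) / real m"
      using e mp by (simp add: field_simps)
    have "?c / ?K^2 = (4 / real m) * (real (2*k+1 choose (m-1)) / real (Suc (2*k+1)))"
    proof -
      have gen: "\<And>C K M. (K::real) > 0 \<Longrightarrow> M > 0 \<Longrightarrow> (2*K*C/M)/K^2 = 4/M*(C/(2*K))"
        by (simp add: field_simps power2_eq_square)
      have r: "real (2*k+2) = 2 * ?K" "real (Suc (2*k+1)) = 2 * ?K" by simp_all
      show ?thesis unfolding ce r using gen[OF _ mp, of ?K] by simp
    qed
    also have "real (2*k+1 choose (m-1)) / real (Suc (2*k+1)) = (-1)^(m-1) / real (2*k+2)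
           + (\<Sum>i=1..m-1. (-1)^(m-1-i) * real (2*k+1 choose (i-1)) / real i)"
      by (subst L1) simp
    finally show ?thesis .
  qed
  have ii: "?c / real (2*k+1) = real (2*k choose (m-1)) / real m + real (2*k choose (m-2)) / real (m-1)"
  proof -
    have "(2*k+2 choose m) = (2*k+1 choose m) + (2*k+1 choose (m-1))"
      using m binomial_Suc_Suc[of "2*k+1" "m-1"] by simp
    moreover have "m * (2*k+1 choose m) = (2*k+1) * (2*k choose (m-1))"
      using m times_binomial_minus1_eq[of m "2*k+1"] by simp
    moreover have "(m-1) * (2*k+1 choose (m-1)) = (2*k+1) * (2*k choose (m-2))"
      using m times_binomial_minus1_eq[of "m-1" "2*k+1"] by (simp add: diff_diff_add numeral_2_eq_2)
    ultimately have e1: "?c = real (2*k+1 choose m) + real (2*k+1 choose (m-1))"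
      and e2: "real m * real (2*k+1 choose m) = real (2*k+1) * real (2*k choose (m-1))"
      and e3: "real (m-1) * real (2*k+1 choose (m-1)) = real (2*k+1) * real (2*k choose (m-2))"
      by (simp_all only: of_nat_mult[symmetric] of_nat_add[symmetric])
    have gen: "\<And>c A B P Q M N D. (M::real) > 0 \<Longrightarrow> N > 0 \<Longrightarrow> D > 0 \<Longrightarrow> c = A + B \<Longrightarrow>
        M * A = D * P \<Longrightarrow> N * B = D * Q \<Longrightarrow> c / D = P / M + Q / N"
      by (simp add: field_simps)
    show ?thesis by (rule gen[OF _ _ _ e1 e2 e3]) (use m in auto)
  qed
  have iii: "?c / real (2*k+3) = (-1)^m / real (2*k+3)
           + (\<Sum>i=1..m. (-1)^(m-i) * real (2*k+2 choose (i-1)) / real i)"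
    using L1[of "2*k+2" m] by (simp add: eval_nat_numeral)
  have iv: "1 / ((2 * ?K - 1) * ?K^2 * (2 * ?K + 1)) = - 1 / ?K^2 + 2 / real (2*k+1) - 2 / real (2*k+3)"
    using pf[of "Suc k"] by simp
  have "real ((2 * Suc k) choose m) / (5 ^ Suc k * (2 * ?K - 1) * ?K^2 * (2 * ?K + 1))
      = x * ?c * (1 / ((2 * ?K - 1) * ?K^2 * (2 * ?K + 1)))"
  proof -
    have x5: "x = 1 / 5 ^ Suc k" by (simp add: x_def power_divide)
    have t: "2 * Suc k = 2*k+2" by simp
    have gen: "\<And>C F A B E. (C::real) / (F*A*B*E) = (1/F)*C*(1/(A*B*E))"
      by (simp add: divide_inverse inverse_mult_distrib mult_ac)
    show ?thesis unfolding x5 t by (rule gen)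
  qed
  also have "\<dots> = - x * (?c / ?K^2) + 2 * x * (?c / real (2*k+1)) - 2 * x * (?c / real (2*k+3))"
    by (simp only: iv) (simp add: divide_inverse algebra_simps)
  also have "\<dots> = - x * ((4 / real m) * ((-1)^(m-1) / real (2*k+2)
           + (\<Sum>i=1..m-1. (-1)^(m-1-i) * real (2*k+1 choose (i-1)) / real i)))
      + 2 * x * (real (2*k choose (m-1)) / real m + real (2*k choose (m-2)) / real (m-1))
      - 2 * x * ((-1)^m / real (2*k+3)
           + (\<Sum>i=1..m. (-1)^(m-i) * real (2*k+2 choose (i-1)) / real i))"
    by (simp only: i ii iii)
  finally have calc: "real ((2 * Suc k) choose m) / (5 ^ Suc k * (2 * ?K - 1) * ?K^2 * (2 * ?K + 1)) = - x * ((4 / real m) * ((-1)^(m-1) / real (2*k+2)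
           + (\<Sum>i=1..m-1. (-1)^(m-1-i) * real (2*k+1 choose (i-1)) / real i)))
      + 2 * x * (real (2*k choose (m-1)) / real m + real (2*k choose (m-2)) / real (m-1))
      - 2 * x * ((-1)^m / real (2*k+3)
           + (\<Sum>i=1..m. (-1)^(m-i) * real (2*k+2 choose (i-1)) / real i))" .
  have sA: "x * (\<Sum>i=1..m-1. (-1)^(m-1-i) * real (2*k+1 choose (i-1)) / real i)
      = (\<Sum>i=1..m-1. (-1)^(m-1-i) / real i * (real (2*k+1 choose (i-1)) * x))"
    by (simp add: sum_distrib_left mult_ac)
  have sB: "x * (\<Sum>i=1..m. (-1)^(m-i) * real (2*k+2 choose (i-1)) / real i)
      = (\<Sum>i=1..m. (-1)^(m-i) / real i * (real (2*k+2 choose (i-1)) * x))"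
    by (simp add: sum_distrib_left mult_ac)
  have gen: "\<And>L x M a b P Q S1 S2 T1 T2 d1 d3 N. (L::real) = -x*(4/M*(a/d1 + S1)) + 2*x*(P/M + Q/N) - 2*x*(b/d3 + S2)
     \<Longrightarrow> T1 = x*S1 \<Longrightarrow> T2 = x*S2 \<Longrightarrow>
     L = -(4/M)*(a*(x/d1) + T1) + 2*((P*x)/M + (Q*x)/N) - 2*(b*(x/d3) + T2)"
    by (simp add: divide_inverse algebra_simps)
  show ?thesis by (rule gen[OF calc sA[symmetric] sB[symmetric]])
qed

lemma altsum_nat:
  fixes g :: "int \<Rightarrow> real"
  assumes "m \<ge> 1"
  shows "(\<Sum>j=1..(m-1) div 2. g (int m - 2 * int j)) - (\<Sum>j=1..m div 2. g (int m - 2 * int j + 1))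
         = (\<Sum>i=1..m-1. (-1)^(m-i) * g (int i))"
  using assms
proof (induction m rule: less_induct)
  case (less m)
  show ?case
  proof (cases "m \<le> 2")
    case True
    with less.prems have "m = 1 \<or> m = 2" by auto
    thus ?thesis by auto
  next
    case False
    define n where "n = m - 2"
    have n: "m = n + 2" "n \<ge> 1" using False unfolding n_def by arith+
    have IH: "(\<Sum>j=1..(n-1) div 2. g (int n - 2 * int j)) - (\<Sum>j=1..n div 2. g (int n - 2 * int j + 1))
         = (\<Sum>i=1..n-1. (-1)^(n-i) * g (int i))"
      using less.IH[of n] n by simp
    have d1: "(m-1) div 2 = Suc ((n-1) div 2)" using n by simp
    have d2: "m div 2 = Suc (n div 2)" using n by simp
    have shift: "(\<Sum>j=1..Suc N. f j) = f 1 + (\<Sum>j=1..N. f (Suc j))" for f :: "nat \<Rightarrow> real" and N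
    proof -
      have "(\<Sum>j=1..Suc N. f j) = (\<Sum>j=0..N. f (Suc j))"
        using sum.shift_bounds_cl_Suc_ivl[of f 0 N] by simp
      also have "\<dots> = f 1 + (\<Sum>j=1..N. f (Suc j))"
        by (subst sum.atLeast_Suc_atMost) auto
      finally show ?thesis .
    qed
    have s1: "(\<Sum>j=1..(m-1) div 2. g (int m - 2 * int j)) = g (int n) + (\<Sum>j=1..(n-1) div 2. g (int n - 2 * int j))"
      unfolding d1 shift using n by (simp add: algebra_simps)
    have s2: "(\<Sum>j=1..m div 2. g (int m - 2 * int j + 1)) = g (int n + 1) + (\<Sum>j=1..n div 2. g (int n - 2 * int j + 1))"
      unfolding d2 shift using n by (simp add: algebra_simps)
    have r: "(\<Sum>i=1..m-1. (-1)^(m-i) * g (int i)) = (\<Sum>i=1..n-1. (-1)^(n-i) * g (int i)) + g (int n) - g (int n + 1)"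
    proof -
      have e1: "m - 1 = Suc n" using n by simp
      have e2: "{1..n} = insert n {1..n-1}" using n by auto
      have "(\<Sum>i=1..m-1. (-1)^(m-i) * g (int i)) = (\<Sum>i=1..n. (-1)^(m-i) * g (int i)) - g (int n + 1)"
        unfolding e1 using n by (simp add: add.commute)
      also have "(\<Sum>i=1..n. (-1)^(m-i) * g (int i)) = (\<Sum>i=1..n-1. (-1)^(m-i) * g (int i)) + g (int n)"
        unfolding e2 using n by (simp add: add.commute)
      also have "(\<Sum>i=1..n-1. (-1)^(m-i) * g (int i)) = (\<Sum>i=1..n-1. (-1)^(n-i) * g (int i))"
      proof (rule sum.cong)
        fix i assume "i \<in> {1..n-1}"
        hence "m - i = (n - i) + 2" using n by auto
        thus "(-1)^(m-i) * g (int i) = (-1)^(n-i) * g (int i)" by (simp add: power_add)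
      qed simp
      finally show ?thesis .
    qed
    show ?thesis unfolding s1 s2 r IH[symmetric] by simp
  qed
qed

lemma floor_half: "m \<ge> 1 \<Longrightarrow> \<lfloor>(real m - 1) / 2\<rfloor> = int ((m-1) div 2)"
proof -
  assume "m \<ge> 1"
  hence "(real m - 1) / 2 = real (m-1) / real (2::nat)" by (simp add: of_nat_diff)
  thus ?thesis by (simp only: floor_divide_of_nat_eq)
qed

lemma ceiling_half: "\<lceil>(real m - 1) / 2\<rceil> = int (m div 2)"
proof (rule ceiling_unique)
  obtain q where "m = 2*q \<or> m = 2*q+1" by (metis oddE evenE)
  thus "real_of_int (int (m div 2)) - 1 < (real m - 1) / 2" "(real m - 1) / 2 \<le> real_of_int (int (m div 2))"
    by auto
qed

lemma sum_int_nat: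
  fixes h :: "int \<Rightarrow> real"
  assumes "a \<ge> 0"
  shows "(\<Sum>j=a..int N. h j) = (\<Sum>j=nat a..N. h (int j))"
proof -
  have "{a..int N} = int ` {nat a..N}" using assms by (simp add: image_int_atLeastAtMost)
  thus ?thesis by (simp add: sum.reindex)
qed

lemma ab_diff: "alpha - beta = sqrt 5"
  unfolding alpha_def beta_def by (simp add: field_simps)

lemma Fib_nat: "Fib (int n) = (alpha^n - beta^n) / sqrt 5"
  by (simp add: Fib_def ab_diff)

lemma Luc_nat: "Luc (int n) = alpha^n + beta^n"
  by (simp add: Luc_def)

lemma V_sums:
  fixes m :: nat
  assumes m: "m \<ge> 2"
  shows "(\<lambda>k. - (4 / real m) * ((-1)^(m-1) * ((1/5)^(k+1) / real (2*k+2))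
          + (\<Sum>i=1..m-1. (-1)^(m-1-i) / real i * (real (2*k+1 choose (i-1)) * (1/5)^(k+1))))
      + 2 * ((real (2*k choose (m-1)) * (1/5)^(k+1)) / real m + (real (2*k choose (m-2)) * (1/5)^(k+1)) / real (m-1))
      - 2 * ((-1)^m * ((1/5)^(k+1) / real (2*k+3))
          + (\<Sum>i=1..m. (-1)^(m-i) / real i * (real (2*k+2 choose (i-1)) * (1/5)^(k+1)))))
   sums
   (- (4 / real m) * ((-1)^(m-1) * (ln (5/4) / 2)
          + (\<Sum>i=1..m-1. (-1)^(m-1-i) / real i * ((alpha^(i-1+1) + beta^(i-1+1)) / 2^(i-1+2))))
      + 2 * (((alpha^(m-1+1) - beta^(m-1+1)) / (sqrt 5 * 2^(m-1+2))) / real m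
           + ((alpha^(m-2+1) - beta^(m-2+1)) / (sqrt 5 * 2^(m-2+2))) / real (m-1))
      - 2 * ((-1)^m * (sqrt 5 * ln alpha - 1)
          + (\<Sum>i=1..m. (-1)^(m-i) / real i * (sqrt 5 / 2^(i-1+2) * (alpha^(i-1+1) - beta^(i-1+1)) - (if i-1 = 0 then 1 else 0)))))"
proof -
  have sA: "(\<lambda>k. \<Sum>i=1..m-1. (-1)^(m-1-i) / real i * (real (2*k+1 choose (i-1)) * (1/5)^(k+1))) sums
      (\<Sum>i=1..m-1. (-1)^(m-1-i) / real i * ((alpha^(i-1+1) + beta^(i-1+1)) / 2^(i-1+2)))"
    by (rule sums_sum, rule sums_mult, rule A2_series)
  have sC: "(\<lambda>k. \<Sum>i=1..m. (-1)^(m-i) / real i * (real (2*k+2 choose (i-1)) * (1/5)^(k+1))) sums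
      (\<Sum>i=1..m. (-1)^(m-i) / real i * (sqrt 5 / 2^(i-1+2) * (alpha^(i-1+1) - beta^(i-1+1)) - (if i-1 = 0 then 1 else 0)))"
    by (rule sums_sum, rule sums_mult, rule C2_series)
  show ?thesis
    by (intro sums_diff sums_add sums_mult sums_divide sA sC A1_series C1_series B_series)
qed

theorem theorem19:
  fixes m :: nat
  assumes "m \<ge> 2"
  shows "(\<lambda>k. if k = 0 then 0 else
           real ((2 * k) choose m) / (5 ^ k * (2 * real k - 1) * (real k)^2 * (2 * real k + 1)))
     sums
     (2 * (-1) ^ m / real m * ln (5 / 4) - (-1) ^ m * 2 * sqrt 5 * ln alpha
      + Fib (int m - 1) / (real m - 1) / 2 ^ (m - 1) + Fib (int m) / real m / 2 ^ m
      + 2 / real m * (\<Sum>j = 1..\<lfloor>(real m - 1) / 2\<rfloor>.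
            Luc (int m - 2 * j) / (real_of_int (int m - 2 * j)) / 2 powi (int m - 2 * j))
      - 2 / real m * (\<Sum>j = 1..\<lceil>(real m - 1) / 2\<rceil>.
            Luc (int m - 2 * j + 1) / (real_of_int (int m - 2 * j + 1)) / 2 powi (int m - 2 * j + 1))
      - 5 * (\<Sum>j = 0..\<lfloor>(real m - 1) / 2\<rfloor>.
            Fib (int m - 2 * j) / (real_of_int (int m - 2 * j)) / 2 powi (int m - 2 * j))
      + 5 * (\<Sum>j = 1..\<lceil>(real m - 1) / 2\<rceil>.
            Fib (int m - 2 * j + 1) / (real_of_int (int m - 2 * j + 1)) / 2 powi (int m - 2 * j + 1)))"
proof -
  have m: "m \<ge> 2" by (rule assms)
  define lu where "lu = (\<lambda>i::int. Luc i / real_of_int i / 2 powi i)"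
  define fi where "fi = (\<lambda>i::int. Fib i / real_of_int i / 2 powi i)"
  define SL where "SL = (\<Sum>i=1..m-1. (-1)^(m-i) * lu (int i))"
  define SF where "SF = (\<Sum>i=1..m. (-1)^(m-i) * fi (int i))"
  have m1: "m \<ge> 1" using m by simp
  have RL: "(\<Sum>j = 1..\<lfloor>(real m - 1) / 2\<rfloor>.
            Luc (int m - 2 * j) / (real_of_int (int m - 2 * j)) / 2 powi (int m - 2 * j))
      - (\<Sum>j = 1..\<lceil>(real m - 1) / 2\<rceil>.
            Luc (int m - 2 * j + 1) / (real_of_int (int m - 2 * j + 1)) / 2 powi (int m - 2 * j + 1)) = SL"
  proof -
    have "(\<Sum>j = 1..\<lfloor>(real m - 1) / 2\<rfloor>.
            Luc (int m - 2 * j) / (real_of_int (int m - 2 * j)) / 2 powi (int m - 2 * j))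
        = (\<Sum>j = 1..int ((m-1) div 2). lu (int m - 2 * j))"
      unfolding floor_half[OF m1] lu_def by simp
    also have "\<dots> = (\<Sum>j = 1..(m-1) div 2. lu (int m - 2 * int j))"
      by (subst sum_int_nat) simp_all
    finally have a: "(\<Sum>j = 1..\<lfloor>(real m - 1) / 2\<rfloor>.
            Luc (int m - 2 * j) / (real_of_int (int m - 2 * j)) / 2 powi (int m - 2 * j))
        = (\<Sum>j = 1..(m-1) div 2. lu (int m - 2 * int j))" .
    have "(\<Sum>j = 1..\<lceil>(real m - 1) / 2\<rceil>.
            Luc (int m - 2 * j + 1) / (real_of_int (int m - 2 * j + 1)) / 2 powi (int m - 2 * j + 1))
        = (\<Sum>j = 1..int (m div 2). lu (int m - 2 * j + 1))"
      unfolding ceiling_half lu_def by simp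
    also have "\<dots> = (\<Sum>j = 1..m div 2. lu (int m - 2 * int j + 1))"
      by (subst sum_int_nat) simp_all
    finally have b: "(\<Sum>j = 1..\<lceil>(real m - 1) / 2\<rceil>.
            Luc (int m - 2 * j + 1) / (real_of_int (int m - 2 * j + 1)) / 2 powi (int m - 2 * j + 1))
        = (\<Sum>j = 1..m div 2. lu (int m - 2 * int j + 1))" .
    show ?thesis unfolding a b SL_def by (rule altsum_nat[OF m1])
  qed
  have RF: "(\<Sum>j = 0..\<lfloor>(real m - 1) / 2\<rfloor>.
            Fib (int m - 2 * j) / (real_of_int (int m - 2 * j)) / 2 powi (int m - 2 * j))
      - (\<Sum>j = 1..\<lceil>(real m - 1) / 2\<rceil>.
            Fib (int m - 2 * j + 1) / (real_of_int (int m - 2 * j + 1)) / 2 powi (int m - 2 * j + 1)) = SF"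
  proof -
    have "(\<Sum>j = 0..\<lfloor>(real m - 1) / 2\<rfloor>.
            Fib (int m - 2 * j) / (real_of_int (int m - 2 * j)) / 2 powi (int m - 2 * j))
        = (\<Sum>j = 0..int ((m-1) div 2). fi (int m - 2 * j))"
      unfolding floor_half[OF m1] fi_def by simp
    also have "\<dots> = (\<Sum>j = 0..(m-1) div 2. fi (int m - 2 * int j))"
      by (subst sum_int_nat) simp_all
    also have "\<dots> = fi (int m) + (\<Sum>j = 1..(m-1) div 2. fi (int m - 2 * int j))"
      by (subst sum.atLeast_Suc_atMost) simp_all
    finally have a: "(\<Sum>j = 0..\<lfloor>(real m - 1) / 2\<rfloor>.
            Fib (int m - 2 * j) / (real_of_int (int m - 2 * j)) / 2 powi (int m - 2 * j))
        = fi (int m) + (\<Sum>j = 1..(m-1) div 2. fi (int m - 2 * int j))" .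
    have "(\<Sum>j = 1..\<lceil>(real m - 1) / 2\<rceil>.
            Fib (int m - 2 * j + 1) / (real_of_int (int m - 2 * j + 1)) / 2 powi (int m - 2 * j + 1))
        = (\<Sum>j = 1..int (m div 2). fi (int m - 2 * j + 1))"
      unfolding ceiling_half fi_def by simp
    also have "\<dots> = (\<Sum>j = 1..m div 2. fi (int m - 2 * int j + 1))"
      by (subst sum_int_nat) simp_all
    finally have b: "(\<Sum>j = 1..\<lceil>(real m - 1) / 2\<rceil>.
            Fib (int m - 2 * j + 1) / (real_of_int (int m - 2 * j + 1)) / 2 powi (int m - 2 * j + 1))
        = (\<Sum>j = 1..m div 2. fi (int m - 2 * int j + 1))" .
    have c: "SF = (\<Sum>i=1..m-1. (-1)^(m-i) * fi (int i)) + fi (int m)"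
    proof -
      have "{1..m} = insert m {1..m-1}" using m1 by auto
      thus ?thesis unfolding SF_def using m1 by (simp add: add.commute)
    qed
    show ?thesis unfolding a b c altsum_nat[OF m1, symmetric] by simp
  qed
  have VA: "(\<Sum>i=1..m-1. (-1)^(m-1-i) / real i * ((alpha^(i-1+1) + beta^(i-1+1)) / 2^(i-1+2)))
      = -(1/2) * SL"
  proof -
    have "(\<Sum>i=1..m-1. (-1)^(m-1-i) / real i * ((alpha^(i-1+1) + beta^(i-1+1)) / 2^(i-1+2)))
        = (\<Sum>i=1..m-1. -(1/2) * ((-1)^(m-i) * lu (int i)))"
    proof (rule sum.cong)
      fix i assume i: "i \<in> {1..m-1}"
      hence e1: "m - i = Suc (m-1-i)" and e2: "i-1+1 = i" and e3: "i-1+2 = Suc i" by auto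
      show "(-1)^(m-1-i) / real i * ((alpha^(i-1+1) + beta^(i-1+1)) / 2^(i-1+2))
          = -(1/2) * ((-1)^(m-i) * lu (int i))"
        unfolding e1 e2 e3 lu_def by (simp add: Luc_nat)
    qed simp
    thus ?thesis unfolding SL_def by (simp add: sum_distrib_left)
  qed
  have VC: "(\<Sum>i=1..m. (-1)^(m-i) / real i * (sqrt 5 / 2^(i-1+2) * (alpha^(i-1+1) - beta^(i-1+1)) - (if i-1 = 0 then 1 else 0)))
      = 5/2 * SF - (-1)^(m-1)"
  proof -
    have "(\<Sum>i=1..m. (-1)^(m-i) / real i * (sqrt 5 / 2^(i-1+2) * (alpha^(i-1+1) - beta^(i-1+1)) - (if i-1 = 0 then 1 else 0)))
        = (\<Sum>i=1..m. 5/2 * ((-1)^(m-i) * fi (int i)) - (if i = 1 then (-1)^(m-1) else 0))"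
    proof (rule sum.cong)
      fix i assume i: "i \<in> {1..m}"
      hence e2: "i-1+1 = i" and e3: "i-1+2 = Suc i" and e4: "(i-1 = 0) = (i = 1)" by auto
      have g2: "\<And>sg I r t P d. (r::real) \<noteq> 0 \<Longrightarrow> I \<noteq> 0 \<Longrightarrow> t \<noteq> 0 \<Longrightarrow>
          sg / I * (r / (2*t) * P - d) = (r*r)/2 * (sg * (P / r / I / t)) - sg / I * d"
        by (simp add: field_simps)
      have "(-1)^(m-i) / real i * (sqrt 5 / 2^(Suc i) * (alpha^i - beta^i) - (if i = 1 then 1 else 0))
          = (sqrt 5 * sqrt 5)/2 * ((-1)^(m-i) * ((alpha^i - beta^i) / sqrt 5 / real i / 2^i)) - (-1)^(m-i) / real i * (if i = 1 then 1 else 0)"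
        using g2[of "sqrt 5" "real i" "2^i" "(-1)^(m-i)" "alpha^i - beta^i" "if i = 1 then 1 else 0"] i
        by simp
      also have "(-1)^(m-i) / real i * (if i = 1 then 1 else 0) = (if i = 1 then (-1::real)^(m-1) else 0)"
        by simp
      finally show "(-1)^(m-i) / real i * (sqrt 5 / 2^(i-1+2) * (alpha^(i-1+1) - beta^(i-1+1)) - (if i-1 = 0 then 1 else 0))
          = 5/2 * ((-1)^(m-i) * fi (int i)) - (if i = 1 then (-1)^(m-1) else 0)"
        unfolding e2 e3 e4 fi_def by (simp add: Fib_nat)
    qed simp
    also have "\<dots> = 5/2 * SF - (-1)^(m-1)"
      unfolding SF_def using m1 by (simp add: sum_subtractf sum_distrib_left)
    finally show ?thesis .
  qed
  have VB1: "(alpha^(m-1+1) - beta^(m-1+1)) / (sqrt 5 * 2^(m-1+2)) / real m = Fib (int m) / real m / 2 ^ m / 2"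
  proof -
    have "m-1+1 = m" "m-1+2 = Suc m" using m1 by auto
    thus ?thesis by (simp add: Fib_nat field_simps)
  qed
  have VB2: "(alpha^(m-2+1) - beta^(m-2+1)) / (sqrt 5 * 2^(m-2+2)) / real (m-1) = Fib (int m - 1) / (real m - 1) / 2 ^ (m - 1) / 2"
  proof -
    have e: "m-2+1 = m-1" "m-2+2 = Suc (m-1)" "int m - 1 = int (m-1)" "real m - 1 = real (m-1)" using m by auto
    show ?thesis unfolding e by (simp add: Fib_nat field_simps)
  qed
  have sg: "(-1::real)^(m-1) = uminus ((-1::real)^m)"
  proof -
    have "m = Suc (m-1)" using m1 by simp
    hence "(-1::real)^m = uminus ((-1::real)^(m-1))" by (metis power_Suc mult_minus1)
    thus ?thesis by simp
  qed
  have gen: "\<And>xM xs xl xa xSL xSF xF1 xF2 xLf xLc xFf xFc xr. (xM::real) > 0 \<Longrightarrow> xLf - xLc = xSL \<Longrightarrow> xFf - xFc = xSF \<Longrightarrow>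
     uminus (4/xM)*((uminus xs)*(xl/2) + uminus (1/2)*xSL) + 2*(xF1/2 + xF2/2) - 2*(xs*(xr*xa - 1) + ((5/2)*xSF - uminus xs))
      = 2*xs/xM*xl - xs*2*xr*xa + xF2 + xF1 + 2/xM*xLf - 2/xM*xLc - 5*xFf + 5*xFc"
    by (simp add: field_simps)
  have mp: "real m > 0" using m by simp
  have aux: "\<And>f s. (\<lambda>n. f (Suc n)) sums s \<Longrightarrow> f 0 = 0 \<Longrightarrow> f sums (s::real)"
    by (simp add: sums_Suc_iff)
  show ?thesis
    apply (rule aux)
     apply (rule sums_eqI[OF V_sums[OF m]])
      apply (simp only: Suc_not_Zero if_False termwise[OF m])
     apply (unfold VA VB1 VB2 VC sg)
     apply (rule gen[OF mp RL RF])
    apply simp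
    done
qed

end
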